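(* Fix $b\in\{0,1\}$ with $0<\mathbb{P}(g=1\mid y=b)<1$, and suppose $\theta\mapsto\mathbb{P}(g=1\mid x=\theta,y=b)$ on $[0,1]$ has a single crossing with the constant $\mathbb{P}(g=1\mid y=b)$, with crossing point $\theta_U$. Let $D_b(\theta)=\mathbb{P}(x\ge\theta\mid g=1,y=b)-\mathbb{P}(x\ge\theta\mid g=0,y=b)$. Then $D_b$ is nondecreasing on $[0,\theta_U]$, nonincreasing on $[\theta_U,1]$ and nonnegative on $[0,1]$. Consequently the TPR-unfairness (case $b=1$), respectively FPR-unfairness (case $b=0$), $U(\theta)=|D_b(\theta)|=D_b(\theta)$ is positively unimodal with global maximum at $\theta_U$.
   Context: $(g,x,y)$ is a random triple with group $g\in\{0,1\}$, label $y\in\{0,1\}$ and real feature $x\in[0,1]$; $x$ has a density $h_x$ strictly positive on $[0,1]$, all conditional densities of $x$ given $g$, $y$, or $(g,y)$ exist and are strictly positive on $[0,1]$, and the conditional probabilities $\theta\mapsto\mathbb{P}(y=1\mid x=\theta)$, $\mathbb{P}(g=1\mid x=\theta)$, $\mathbb{P}(g=1\mid x=\theta,y=b)$ are continuous in $\theta$; $0<\mathbb{P}(g=1)<1$ and $0<\mathbb{P}(y=1)<1$. A threshold classifier is $f_\theta(x)=\mathbb{I}[x\ge\theta]$. $\mathrm{TPR}(\theta\mid g)=\mathbb{P}(x\ge\theta\mid g,y=1)$, $\mathrm{FPR}(\theta\mid g)=\mathbb{P}(x\ge\theta\mid g,y=0)$, and $U_{\mathcal M}(\theta)=|\mathcal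 M(\theta\mid g=1)-\mathcal M(\theta\mid g=0)|$ for $\mathcal M\in\{\mathrm{TPR},\mathrm{FPR}\}$. A function $q$ on $[0,1]$ has a single crossing with a constant $v$ if there is $z\in[0,1]$ with $q(t)\le v$ for $t\le z$ and $q(t)\ge v$ for $t\ge z$ ($z$ is a crossing point). *)

theory Defs
  imports "HOL-Analysis.Analysis"
begin

text \<open>The law of the random triple (g,x,y) is described by the joint densities
  h g y t, for g,y in {0,1}: P(g = g0, y = y0, x in A) = integral over A of h g0 y0.\<close>

definition pr_gy :: "(nat \<Rightarrow> nat \<Rightarrow> real \<Rightarrow> real) \<Rightarrow> nat \<Rightarrow> nat \<Rightarrow> real" where
  "pr_gy h g y = integral {0..1} (h g y)"

definition cond_tail :: "(nat \<Rightarrow> nat \<Rightarrow> real \<Rightarrow> real) \<Rightarrow> nat \<Rightarrow> nat \<Rightarrow> real \<Rightarrow> real" where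
  "cond_tail h g y \<theta> = integral {\<theta>..1} (h g y) / pr_gy h g y"

definition TPR :: "(nat \<Rightarrow> nat \<Rightarrow> real \<Rightarrow> real) \<Rightarrow> real \<Rightarrow> nat \<Rightarrow> real" where
  "TPR h \<theta> g = cond_tail h g 1 \<theta>"

definition FPR :: "(nat \<Rightarrow> nat \<Rightarrow> real \<Rightarrow> real) \<Rightarrow> real \<Rightarrow> nat \<Rightarrow> real" where
  "FPR h \<theta> g = cond_tail h g 0 \<theta>"

definition unfairness :: "(real \<Rightarrow> nat \<Rightarrow> real) \<Rightarrow> real \<Rightarrow> real" where
  "unfairness M \<theta> = \<bar>M \<theta> 1 - M \<theta> 0\<bar>"

definition pr_g1_given_y :: "(nat \<Rightarrow> nat \<Rightarrow> real \<Rightarrow> real) \<Rightarrow> nat \<Rightarrow> real" where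
  "pr_g1_given_y h b = pr_gy h 1 b / (pr_gy h 0 b + pr_gy h 1 b)"

definition pr_g1_given_xy :: "(nat \<Rightarrow> nat \<Rightarrow> real \<Rightarrow> real) \<Rightarrow> nat \<Rightarrow> real \<Rightarrow> real" where
  "pr_g1_given_xy h b \<theta> = h 1 b \<theta> / (h 0 b \<theta> + h 1 b \<theta>)"

definition pr_g1_given_x :: "(nat \<Rightarrow> nat \<Rightarrow> real \<Rightarrow> real) \<Rightarrow> real \<Rightarrow> real" where
  "pr_g1_given_x h \<theta> = (h 1 0 \<theta> + h 1 1 \<theta>) / (h 0 0 \<theta> + h 0 1 \<theta> + h 1 0 \<theta> + h 1 1 \<theta>)"

definition pr_y1_given_x :: "(nat \<Rightarrow> nat \<Rightarrow> real \<Rightarrow> real) \<Rightarrow> real \<Rightarrow> real" where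
  "pr_y1_given_x h \<theta> = (h 0 1 \<theta> + h 1 1 \<theta>) / (h 0 0 \<theta> + h 0 1 \<theta> + h 1 0 \<theta> + h 1 1 \<theta>)"

definition valid_model :: "(nat \<Rightarrow> nat \<Rightarrow> real \<Rightarrow> real) \<Rightarrow> bool" where
  "valid_model h \<longleftrightarrow>
     (\<forall>g\<in>{0,1}. \<forall>y\<in>{0,1}. h g y integrable_on {0..1} \<and> (\<forall>t\<in>{0..1}. h g y t > 0)) \<and>
     (\<Sum>g\<in>{0,1::nat}. \<Sum>y\<in>{0,1::nat}. pr_gy h g y) = 1 \<and>
     continuous_on {0..1} (pr_y1_given_x h) \<and>
     continuous_on {0..1} (pr_g1_given_x h) \<and>
     (\<forall>b\<in>{0,1}. continuous_on {0..1} (pr_g1_given_xy h b))"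

definition single_crossing :: "(real \<Rightarrow> real) \<Rightarrow> real \<Rightarrow> real \<Rightarrow> bool" where
  "single_crossing q v z \<longleftrightarrow> z \<in> {0..1} \<and>
     (\<forall>t\<in>{0..1}. t \<le> z \<longrightarrow> q t \<le> v) \<and> (\<forall>t\<in>{0..1}. z \<le> t \<longrightarrow> v \<le> q t)"

end

theory Submission
  imports Defs
begin

theorem mainTheorem4:
  fixes h :: "nat \<Rightarrow> nat \<Rightarrow> real \<Rightarrow> real" and b :: nat and \<theta>U :: real
  assumes "valid_model h"
    and "b \<in> {0,1}"
    and "0 < pr_g1_given_y h b" and "pr_g1_given_y h b < 1"
    and "single_crossing (pr_g1_given_xy h b) (pr_g1_given_y h b) \<theta>U"
  defines "D \<equiv> (\<lambda>\<theta>. cond_tail h 1 b \<theta> - cond_tail h 0 b \<theta>)"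
    and "U \<equiv> (if b = 1 then unfairness (TPR h) else unfairness (FPR h))"
  shows "mono_on {0..\<theta>U} D \<and> antimono_on {\<theta>U..1} D \<and> (\<forall>\<theta>\<in>{0..1}. 0 \<le> D \<theta>) \<and>
         (\<forall>\<theta>\<in>{0..1}. U \<theta> = D \<theta>) \<and>
         mono_on {0..\<theta>U} U \<and> antimono_on {\<theta>U..1} U \<and> (\<forall>\<theta>\<in>{0..1}. U \<theta> \<le> U \<theta>U)"
proof -
  define f0 where "f0 = h 0 b"
  define f1 where "f1 = h 1 b"
  define p0 where "p0 = integral {0..1} f0"
  define p1 where "p1 = integral {0..1} f1"
  have i0: "f0 integrable_on {0..1}" and pos0: "\<And>t. t \<in> {0..1} \<Longrightarrow> f0 t > 0"
    using assms(1,2) unfolding valid_model_def f0_def by auto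
  have i1: "f1 integrable_on {0..1}" and pos1: "\<And>t. t \<in> {0..1} \<Longrightarrow> f1 t > 0"
    using assms(1,2) unfolding valid_model_def f1_def by auto
  have p0ge: "p0 \<ge> 0" unfolding p0_def using i0 pos0 by (intro integral_nonneg) (auto intro: less_imp_le)
  have p1ge: "p1 \<ge> 0" unfolding p1_def using i1 pos1 by (intro integral_nonneg) (auto intro: less_imp_le)
  have v: "pr_g1_given_y h b = p1 / (p0 + p1)"
    unfolding pr_g1_given_y_def pr_gy_def p0_def p1_def f0_def f1_def ..
  have p1pos: "p1 > 0"
  proof (rule ccontr)
    assume "\<not> p1 > 0" then have "p1 = 0" using p1ge by simp
    then show False using assms(3) v by simp
  qed
  have p0pos: "p0 > 0"
  proof (rule ccontr)
    assume "\<not> p0 > 0" then have "p0 = 0" using p0ge by simp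
    then show False using assms(4) v p1pos by simp
  qed
  define r where "r = (\<lambda>t. f1 t / p1 - f0 t / p0)"
  have ir: "r integrable_on {0..1}" unfolding r_def
    by (intro integrable_diff integrable_on_divide i0 i1)
  have irs: "r integrable_on {s..t}" if "0 \<le> s" "t \<le> 1" for s t
    using integrable_subinterval_real[OF ir] that by auto
  have zU: "\<theta>U \<in> {0..1}" using assms(5) unfolding single_crossing_def by auto
  have cr: "(r t \<le> 0) = (pr_g1_given_xy h b t \<le> pr_g1_given_y h b)"
    and cr2: "(0 \<le> r t) = (pr_g1_given_y h b \<le> pr_g1_given_xy h b t)"
    if "t \<in> {0..1}" for t
  proof -
    have a: "f0 t > 0" "f1 t > 0" using pos0 pos1 that by auto
    have q: "pr_g1_given_xy h b t = f1 t / (f0 t + f1 t)"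
      unfolding pr_g1_given_xy_def f0_def f1_def ..
    show "(r t \<le> 0) = (pr_g1_given_xy h b t \<le> pr_g1_given_y h b)"
      unfolding q v r_def using a p0pos p1pos
      by (simp add: divide_simps) (smt (verit) mult.commute distrib_left distrib_right)
    show "(0 \<le> r t) = (pr_g1_given_y h b \<le> pr_g1_given_xy h b t)"
      unfolding q v r_def using a p0pos p1pos
      by (simp add: divide_simps) (smt (verit) mult.commute distrib_left distrib_right)
  qed
  have rneg: "r t \<le> 0" if "t \<in> {0..\<theta>U}" for t
    using cr[of t] assms(5) zU that unfolding single_crossing_def by auto
  have rpos: "0 \<le> r t" if "t \<in> {\<theta>U..1}" for t
    using cr2[of t] assms(5) zU that unfolding single_crossing_def by auto
  have Dr: "D \<theta> = integral {\<theta>..1} r" if "\<theta> \<in> {0..1}" for \<theta>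
  proof -
    have "f0 integrable_on {\<theta>..1}" "f1 integrable_on {\<theta>..1}"
      using integrable_subinterval_real[OF i0] integrable_subinterval_real[OF i1] that by auto
    then have "integral {\<theta>..1} r = integral {\<theta>..1} f1 / p1 - integral {\<theta>..1} f0 / p0"
      unfolding r_def by (subst integral_diff) (auto intro: integrable_on_divide)
    then show ?thesis
      unfolding D_def cond_tail_def pr_gy_def p0_def p1_def f0_def f1_def by simp
  qed
  have Ddiff: "D s - D t = integral {s..t} r" if "0 \<le> s" "s \<le> t" "t \<le> 1" for s t
  proof -
    have "integral {s..t} r + integral {t..1} r = integral {s..1} r"
      using Henstock_Kurzweil_Integration.integral_combine[of s t 1 r] that irs[of s 1] by auto
    then show ?thesis using Dr[of s] Dr[of t] that by auto
  qed
  have D0: "D 0 = 0"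
  proof -
    have "D 0 = p1 / p1 - p0 / p0"
      unfolding D_def cond_tail_def pr_gy_def p0_def p1_def f0_def f1_def by simp
    then show ?thesis using p0pos p1pos by simp
  qed
  have D1: "D 1 = 0" using Dr[of 1] by simp
  have monoD: "mono_on {0..\<theta>U} D"
  proof (rule mono_onI)
    fix s t assume st: "s \<in> {0..\<theta>U}" "t \<in> {0..\<theta>U}" "s \<le> t"
    have "integral {s..t} r \<le> 0"
      using integral_le[of r "{s..t}" "\<lambda>_. 0"] irs[of s t] st zU rneg by auto
    then show "D s \<le> D t" using Ddiff[of s t] st zU by auto
  qed
  have antiD: "antimono_on {\<theta>U..1} D"
  proof (rule monotone_onI)
    fix s t assume st: "s \<in> {\<theta>U..1}" "t \<in> {\<theta>U..1}" "s \<le> t"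
    have "0 \<le> integral {s..t} r"
      using integral_nonneg[of r "{s..t}"] irs[of s t] st zU rpos by auto
    then show "D t \<le> D s" using Ddiff[of s t] st zU by auto
  qed
  have nonneg: "\<forall>\<theta>\<in>{0..1}. 0 \<le> D \<theta>"
  proof
    fix \<theta> :: real assume th: "\<theta> \<in> {0..1}"
    show "0 \<le> D \<theta>"
    proof (cases "\<theta> \<le> \<theta>U")
      case True then show ?thesis using mono_onD[OF monoD, of 0 \<theta>] D0 th zU by auto
    next
      case False then show ?thesis using monotone_onD[OF antiD, of \<theta> 1] D1 th zU by auto
    qed
  qed
  have UD: "\<forall>\<theta>\<in>{0..1}. U \<theta> = D \<theta>"
    using nonneg assms(2) unfolding U_def D_def unfolding unfairness_def TPR_def FPR_def
    by auto
  have monoU: "mono_on {0..\<theta>U} U"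
    using monoD UD zU unfolding mono_on_def by auto
  have antiU: "antimono_on {\<theta>U..1} U"
    using antiD UD zU unfolding monotone_on_def by auto
  have maxU: "\<forall>\<theta>\<in>{0..1}. U \<theta> \<le> U \<theta>U"
  proof
    fix \<theta> :: real assume th: "\<theta> \<in> {0..1}"
    show "U \<theta> \<le> U \<theta>U"
    proof (cases "\<theta> \<le> \<theta>U")
      case True then show ?thesis using mono_onD[OF monoU, of \<theta> \<theta>U] th zU by auto
    next
      case False then show ?thesis using monotone_onD[OF antiU, of \<theta>U \<theta>] th zU by auto
    qed
  qed
  show ?thesis using monoD antiD nonneg UD monoU antiU maxU by blast
qed

end
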